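(* Let $\mathcal{U}$ be a finite set of users, each associated with a base station $b_u$, where each base station $b$ has a finite set of integer-indexed subchannels $\mathcal{C}_b$, and assume the number of users associated with each base station $b$ is at most $|\mathcal{C}_b|$. Some users are "ongoing", each having a previously used subchannel $\bar c_u\in\mathcal{C}_{b_u}$, where ongoing users associated with the same base station have pairwise distinct previous subchannels. For each $u$ let $\mathcal{C}^t_u=\{\bar c_u\}$ if $u$ is ongoing and $\mathcal{C}^t_u=\mathcal{C}_{b_u}$ otherwise. Call two distinct users $u,u'$ conflicting if $b_u=b_{u'}$, or if both are ongoing with $\bar c_u\neq\bar c_{u'}$. Let $i^t_{u,u'}$ satisfy $i^t_{u,u}=0$, $i^t_{u,u'}=+\infty$ for conflicting pairs, and $i^t_{u,u'}\in[0,\infty)$ otherwise. Then every optimal solution of (P3): minimize over $\boldsymbol{c}^t$ with $c^t_u\in\mathcal{C}^t_u$ the objective $\frac12\sum_{u,u'\in\mathcal{U}}\max\{0,1-|c^t_u-c^t_{u'}|\}\, i^t_{u,u'}$ (with $0\cdot\infty=0$), is a solution of the subchannel allocation problem: it assigns pairwise different subchannels to users of the same base station, keeps each ongoing user on its previous subchannel, and among all assignments satisfying these requirements it minimizes the total co-channel interference $\frac12\sum_{u,u':\,c_u=c_{u'}} i^t_{u,u'}$.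
   Context: The subchannel allocation problem: assign to each associated user a subchannel of its base station so that users of the same base station use distinct subchannels, ongoing users keep their previous subchannels, and the total pairwise interference among users sharing a subchannel is minimized. *)

theory Defs
  imports "HOL-Library.Extended_Nonnegative_Real"
begin

text \<open>Users of type 'u, base stations of type 'b. bs u is the base station of user u,
  C b the (integer-indexed) subchannels of base station b, Og the ongoing users,
  cbar u the previous subchannel of ongoing user u.\<close>

definition Ct :: "('u \<Rightarrow> 'b) \<Rightarrow> ('b \<Rightarrow> int set) \<Rightarrow> 'u set \<Rightarrow> ('u \<Rightarrow> int) \<Rightarrow> 'u \<Rightarrow> int set" where
  "Ct bs C Og cbar u = (if u \<in> Og then {cbar u} else C (bs u))"

definition conflicting :: "('u \<Rightarrow> 'b) \<Rightarrow> 'u set \<Rightarrow> ('u \<Rightarrow> int) \<Rightarrow> 'u \<Rightarrow> 'u \<Rightarrow> bool" where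
  "conflicting bs Og cbar u u' \<longleftrightarrow> u \<noteq> u' \<and>
     (bs u = bs u' \<or> (u \<in> Og \<and> u' \<in> Og \<and> cbar u \<noteq> cbar u'))"

text \<open>Objective of (P3); multiplication in ennreal satisfies 0 * \<infinity> = 0.\<close>
definition P3_obj :: "'u set \<Rightarrow> ('u \<Rightarrow> 'u \<Rightarrow> ennreal) \<Rightarrow> ('u \<Rightarrow> int) \<Rightarrow> ennreal" where
  "P3_obj U i c = (1/2) * (\<Sum>u\<in>U. \<Sum>u'\<in>U.
      ennreal (max 0 (1 - \<bar>real_of_int (c u - c u')\<bar>)) * i u u')"

definition P3_optimal :: "('u \<Rightarrow> 'b) \<Rightarrow> ('b \<Rightarrow> int set) \<Rightarrow> 'u set \<Rightarrow> 'u set \<Rightarrow> ('u \<Rightarrow> int)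
    \<Rightarrow> ('u \<Rightarrow> 'u \<Rightarrow> ennreal) \<Rightarrow> ('u \<Rightarrow> int) \<Rightarrow> bool" where
  "P3_optimal bs C U Og cbar i c \<longleftrightarrow>
     (\<forall>u\<in>U. c u \<in> Ct bs C Og cbar u) \<and>
     (\<forall>c'. (\<forall>u\<in>U. c' u \<in> Ct bs C Og cbar u) \<longrightarrow> P3_obj U i c \<le> P3_obj U i c')"

definition valid_alloc :: "('u \<Rightarrow> 'b) \<Rightarrow> ('b \<Rightarrow> int set) \<Rightarrow> 'u set \<Rightarrow> 'u set \<Rightarrow> ('u \<Rightarrow> int)
    \<Rightarrow> ('u \<Rightarrow> int) \<Rightarrow> bool" where
  "valid_alloc bs C U Og cbar c \<longleftrightarrow>
     (\<forall>u\<in>U. c u \<in> C (bs u)) \<and>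
     (\<forall>u\<in>U. \<forall>u'\<in>U. u \<noteq> u' \<and> bs u = bs u' \<longrightarrow> c u \<noteq> c u') \<and>
     (\<forall>u\<in>Og. c u = cbar u)"

definition cochannel_interf :: "'u set \<Rightarrow> ('u \<Rightarrow> 'u \<Rightarrow> ennreal) \<Rightarrow> ('u \<Rightarrow> int) \<Rightarrow> ennreal" where
  "cochannel_interf U i c = (1/2) * (\<Sum>(u,u')\<in>{(u,u'). u \<in> U \<and> u' \<in> U \<and> c u = c u'}. i u u')"

end

theory Submission
  imports Defs
begin


lemma indic_int: "max 0 (1 - \<bar>real_of_int (a - b)\<bar>) = (if a = b then 1 else 0)"
proof (cases "a = b")
  case False
  then have "\<bar>real_of_int (a - b)\<bar> \<ge> 1" by linarith
  then show ?thesis using False by simp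
qed simp

lemma obj_eq:
  assumes "finite U"
  shows "P3_obj U i c = cochannel_interf U i c"
proof -
  have "(\<Sum>u\<in>U. \<Sum>u'\<in>U. ennreal (max 0 (1 - \<bar>real_of_int (c u - c u')\<bar>)) * i u u')
      = (\<Sum>u\<in>U. \<Sum>u'\<in>U. (if c u = c u' then i u u' else 0))"
    by (intro sum.cong refl) (simp only: indic_int, simp)
  also have "\<dots> = (\<Sum>x\<in>U \<times> U. (if c (fst x) = c (snd x) then i (fst x) (snd x) else 0))"
    by (simp add: sum.cartesian_product case_prod_beta')
  also have "\<dots> = (\<Sum>x\<in>{x \<in> U \<times> U. c (fst x) = c (snd x)}. i (fst x) (snd x))"
    using assms by (simp add: sum.inter_filter)
  also have "{x \<in> U \<times> U. c (fst x) = c (snd x)} = {(u,u'). u \<in> U \<and> u' \<in> U \<and> c u = c u'}"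
    by auto
  also have "(\<Sum>x\<in>{(u,u'). u \<in> U \<and> u' \<in> U \<and> c u = c u'}. i (fst x) (snd x))
     = (\<Sum>(u,u')\<in>{(u,u'). u \<in> U \<and> u' \<in> U \<and> c u = c u'}. i u u')"
    by (simp add: case_prod_beta')
  finally show ?thesis unfolding P3_obj_def cochannel_interf_def by simp
qed

theorem proposition2:
  fixes U :: "'u set" and bs :: "'u \<Rightarrow> 'b" and C :: "'b \<Rightarrow> int set"
    and Og :: "'u set" and cbar :: "'u \<Rightarrow> int"
    and i :: "'u \<Rightarrow> 'u \<Rightarrow> ennreal" and c :: "'u \<Rightarrow> int"
  assumes finU: "finite U"
    and finC: "\<And>b. finite (C b)"
    and load: "\<And>b. card {u \<in> U. bs u = b} \<le> card (C b)"
    and OU: "Og \<subseteq> U"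
    and cbar_in: "\<And>u. u \<in> Og \<Longrightarrow> cbar u \<in> C (bs u)"
    and cbar_dist: "\<And>u u'. u \<in> Og \<Longrightarrow> u' \<in> Og \<Longrightarrow> u \<noteq> u' \<Longrightarrow> bs u = bs u' \<Longrightarrow> cbar u \<noteq> cbar u'"
    and i_diag: "\<And>u. u \<in> U \<Longrightarrow> i u u = 0"
    and i_conf: "\<And>u u'. u \<in> U \<Longrightarrow> u' \<in> U \<Longrightarrow> conflicting bs Og cbar u u' \<Longrightarrow> i u u' = \<infinity>"
    and i_fin: "\<And>u u'. u \<in> U \<Longrightarrow> u' \<in> U \<Longrightarrow> u \<noteq> u' \<Longrightarrow> \<not> conflicting bs Og cbar u u' \<Longrightarrow> i u u' < \<infinity>"
    and opt: "P3_optimal bs C U Og cbar i c"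
  shows "valid_alloc bs C U Og cbar c \<and>
         (\<forall>c'. valid_alloc bs C U Og cbar c' \<longrightarrow> cochannel_interf U i c \<le> cochannel_interf U i c')"
proof -
  have ex: "\<exists>f. f ` ({u \<in> U. bs u = b} - Og) \<subseteq> C b - cbar ` (Og \<inter> {u. bs u = b})
          \<and> inj_on f ({u \<in> U. bs u = b} - Og)" for b
  proof (rule card_le_inj)
    let ?A = "{u \<in> U. bs u = b}" and ?O = "Og \<inter> {u. bs u = b}"
    show "finite (?A - Og)" using finU by simp
    show "finite (C b - cbar ` ?O)" using finC by simp
    have fO: "finite ?O" using OU finU by (meson finite_Int finite_subset)
    have injO: "inj_on cbar ?O" using cbar_dist by (auto simp: inj_on_def) metis
    have sub: "cbar ` ?O \<subseteq> C b" using cbar_in by auto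
    have OA: "?O \<subseteq> ?A" using OU by auto
    have "card (?A - Og) = card ?A - card ?O"
    proof -
      have "?A - Og = ?A - ?O" by auto
      then show ?thesis using OA finU by (simp add: card_Diff_subset fO)
    qed
    also have "\<dots> \<le> card (C b) - card ?O" using load[of b] by simp
    also have "\<dots> = card (C b - cbar ` ?O)"
      using card_Diff_subset[OF finite_imageI[OF fO] sub] card_image[OF injO] by simp
    finally show "card (?A - Og) \<le> card (C b - cbar ` ?O)" .
  qed
  define f where "f b = (SOME f. f ` ({u \<in> U. bs u = b} - Og) \<subseteq> C b - cbar ` (Og \<inter> {u. bs u = b})
          \<and> inj_on f ({u \<in> U. bs u = b} - Og))" for b
  have fP: "f b ` ({u \<in> U. bs u = b} - Og) \<subseteq> C b - cbar ` (Og \<inter> {u. bs u = b})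
          \<and> inj_on (f b) ({u \<in> U. bs u = b} - Og)" for b
    unfolding f_def using someI_ex[OF ex[of b]] .
  define c0 where "c0 u = (if u \<in> Og then cbar u else f (bs u) u)" for u
  have c0_valid: "valid_alloc bs C U Og cbar c0"
    unfolding valid_alloc_def
  proof (intro conjI ballI impI)
    fix u assume u: "u \<in> U"
    show "c0 u \<in> C (bs u)"
      using fP[of "bs u"] u cbar_in unfolding c0_def by (auto split: if_splits)
  next
    fix u u' assume u: "u \<in> U" and u': "u' \<in> U" and h: "u \<noteq> u' \<and> bs u = bs u'"
    let ?b = "bs u"
    show "c0 u \<noteq> c0 u'"
    proof (cases "u \<in> Og"; cases "u' \<in> Og")
      assume "u \<in> Og" "u' \<in> Og" then show ?thesis using h cbar_dist c0_def by auto
    next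
      assume a: "u \<in> Og" "u' \<notin> Og"
      then have "f ?b u' \<notin> cbar ` (Og \<inter> {v. bs v = ?b})" using fP[of ?b] u' h by auto
      moreover have "cbar u \<in> cbar ` (Og \<inter> {v. bs v = ?b})" using a by auto
      moreover have "c0 u = cbar u" "c0 u' = f ?b u'" using a h by (auto simp: c0_def)
      ultimately show ?thesis by auto
    next
      assume a: "u \<notin> Og" "u' \<in> Og"
      then have "f ?b u \<notin> cbar ` (Og \<inter> {v. bs v = ?b})" using fP[of ?b] u h by auto
      moreover have "cbar u' \<in> cbar ` (Og \<inter> {v. bs v = ?b})" using a h by auto
      moreover have "c0 u' = cbar u'" "c0 u = f ?b u" using a h by (auto simp: c0_def)
      ultimately show ?thesis by auto
    next
      assume a: "u \<notin> Og" "u' \<notin> Og"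
      then have "f ?b u \<noteq> f ?b u'" using fP[of ?b] u u' h unfolding inj_on_def by auto
      then show ?thesis using a h c0_def by auto
    qed
  next
    fix u assume "u \<in> Og" then show "c0 u = cbar u" by (simp add: c0_def)
  qed
  have valid_Ct: "\<forall>u\<in>U. c' u \<in> Ct bs C Og cbar u" if "valid_alloc bs C U Og cbar c'" for c'
    using that unfolding valid_alloc_def Ct_def by auto
  have valid_fin: "cochannel_interf U i c' < top" if v: "valid_alloc bs C U Og cbar c'" for c'
  proof -
    have fin: "finite {(u,u'). u \<in> U \<and> u' \<in> U \<and> c' u = c' u'}"
      by (rule finite_subset[of _ "U \<times> U"]) (auto simp: finU)
    have "i u u' < top" if "u \<in> U" "u' \<in> U" "c' u = c' u'" for u u'
    proof (cases "u = u'")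
      case True then show ?thesis using i_diag that by simp
    next
      case False
      have "\<not> conflicting bs Og cbar u u'"
        using v that False unfolding valid_alloc_def conflicting_def by metis
      then show ?thesis using i_fin that False by simp
    qed
    then have "(\<Sum>(u,u')\<in>{(u,u'). u \<in> U \<and> u' \<in> U \<and> c' u = c' u'}. i u u') \<noteq> top"
      using fin by (subst ennreal_sum_eq_top) (auto, metis less_irrefl)
    then show ?thesis unfolding cochannel_interf_def
      by (simp only: less_top[symmetric] ennreal_mult_eq_top_iff ennreal_divide_eq_top_iff) simp
  qed
  have cCt: "\<forall>u\<in>U. c u \<in> Ct bs C Og cbar u" and copt: "\<And>c'. (\<forall>u\<in>U. c' u \<in> Ct bs C Og cbar u) \<Longrightarrow> P3_obj U i c \<le> P3_obj U i c'"
    using opt unfolding P3_optimal_def by auto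
  have cfin: "cochannel_interf U i c < top"
    using copt[OF valid_Ct[OF c0_valid]] valid_fin[OF c0_valid] obj_eq[OF finU]
    by (metis order.strict_trans1)
  have cvalid: "valid_alloc bs C U Og cbar c"
    unfolding valid_alloc_def
  proof (intro conjI ballI impI)
    fix u assume "u \<in> U" then show "c u \<in> C (bs u)" using cCt cbar_in unfolding Ct_def by (auto split: if_splits)
  next
    fix u assume uo: "u \<in> Og"
    then have "u \<in> U" using OU by auto
    then have "c u \<in> Ct bs C Og cbar u" using cCt by blast
    then show "c u = cbar u" using uo unfolding Ct_def by simp
  next
    fix u u' assume u: "u \<in> U" and u': "u' \<in> U" and h: "u \<noteq> u' \<and> bs u = bs u'"
    show "c u \<noteq> c u'"
    proof
      assume eq: "c u = c u'"
      have fin: "finite {(u,u'). u \<in> U \<and> u' \<in> U \<and> c u = c u'}"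
        by (rule finite_subset[of _ "U \<times> U"]) (auto simp: finU)
      have "i u u' = top" using i_conf u u' h unfolding conflicting_def by auto
      then have "(\<Sum>(u,u')\<in>{(u,u'). u \<in> U \<and> u' \<in> U \<and> c u = c u'}. i u u') = top"
        using fin u u' eq by (subst ennreal_sum_eq_top) auto
      then have "cochannel_interf U i c = top" unfolding cochannel_interf_def
        by (simp only: ennreal_mult_eq_top_iff ennreal_divide_eq_top_iff) simp
      then show False using cfin by simp
    qed
  qed
  show ?thesis
  proof (intro conjI allI impI cvalid)
    fix c' assume "valid_alloc bs C U Og cbar c'"
    then show "cochannel_interf U i c \<le> cochannel_interf U i c'"
      using copt[OF valid_Ct] obj_eq[OF finU] by metis
  qed
qed

end
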